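(* Suppose $\kappa^2(1-\gamma)^H<1$ and the disturbance-action policy is implemented with parameters $\bm M_t\in\mathcal M$ for all $t$. Let $J_T(\bm M_{0:T})=\mathbb E[\sum_{t=0}^Tc_t(x_t,u_t)]$ be the resulting expected total cost. Then $$\Big|J_T(\bm M_{0:T})-\sum_{t=0}^Tf_t(\bm M_{t-H:t})\Big|\le TGb^2\kappa^2(1-\gamma)^H(1+\kappa),$$ where $b=\frac{\kappa\sqrt n\,\bar w(\kappa^2+2\kappa^5\kappa_B\sqrt{mn}H)}{(1-\kappa^2(1-\gamma)^H)\gamma}+\frac{2\sqrt{mn}\kappa^3\bar w}{\gamma}$.
   Context: System $x_{t+1}=Ax_t+Bu_t+w_t$, $A\in\mathbb R^{n\times n}$, $B\in\mathbb R^{n\times m}$, $x_0=0$, $t=0,\dots,T$; $w_t$ i.i.d. with $\|w_t\|_\infty\le\bar w$, $\bar w>0$. Costs: each $c_t$ is convex and differentiable on $\mathbb R^n\times\mathbb R^m$, and there is $G>0$ with $\|\nabla_xc_t(x,u)\|_2,\|\nabla_uc_t(x,u)\|_2\le Gb'$ whenever $\|x\|_2,\|u\|_2\le b'$ (for any $b'>0$). Matrix $\|\cdot\|_\infty$ = max absolute row sum, $\|\cdot\|_2$ spectral norm. For $\kappa\ge1$, $\gamma\in(0,1)$, $K$ is $(\kappa,\gamma)$-strongly stable if $A-BK=Q^{-1}LQ$ with $\|L\|_2\le1-\gamma$, $\max(\|Q\|_2,\|Q^{-1}\|_2,\|K\|_2)\le\kappa$; $\kappa_B=\max(\|B\|_2,1)$.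 Fix $(\kappa,\gamma)$-strongly stable $\mathbb K$, $A_{\mathbb K}=A-B\mathbb K$, $H\ge1$. Parameters $\bm M=(M^{[1]},\dots,M^{[H]})$, $M^{[i]}\in\mathbb R^{m\times n}$; $\mathcal M=\{\bm M:\|M^{[i]}\|_\infty\le2\sqrt n\kappa^3(1-\gamma)^{i-1}\}$; implementing $\bm M_t$ means $u_t=-\mathbb Kx_t+\sum_{i=1}^HM_t^{[i]}w_{t-i}$ with $w_s=0$ for $s<0$. $\Phi^x_k(\bm M_{t-H:t-1})=A_{\mathbb K}^{k-1}\mathds1_{(k\le H)}+\sum_{i=1}^HA_{\mathbb K}^{i-1}BM_{t-i}^{[k-i]}\mathds1_{(1\le k-i\le H)}$, $\Phi^u_k(\bm M_{t-H:t})=M_t^{[k]}\mathds1_{(k\le H)}-\mathbb K\Phi^x_k(\bm M_{t-H:t-1})$; approximate state and action $\tilde x_t=\sum_{k=1}^{2H}\Phi^x_k(\bm M_{t-H:t-1})w_{t-k}$, $\tilde u_t=\sum_{k=1}^{2H}\Phi^u_k(\bm M_{t-H:t})w_{t-k}$; $f_t(\bm M_{t-H:t})=\mathbb E[c_t(\tilde x_t,\tilde u_t)]$. *)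

theory Defs
  imports "HOL-Analysis.Analysis" "HOL-Probability.Probability"
begin

definition spec_norm :: "real^'a^'b \<Rightarrow> real" where
  "spec_norm M = onorm (\<lambda>x. M *v x)"

definition mat_inf_norm :: "real^'a^'b \<Rightarrow> real" where
  "mat_inf_norm M = Max (range (\<lambda>i. \<Sum>j\<in>UNIV. \<bar>M $ i $ j\<bar>))"

text \<open>Matrix powers (the type real^'n^'n has componentwise multiplication, so we define them).\<close>
fun mpow :: "real^'n^'n \<Rightarrow> nat \<Rightarrow> real^'n^'n" where
  "mpow X 0 = mat 1"
| "mpow X (Suc k) = X ** mpow X k"

definition strongly_stable :: "real \<Rightarrow> real \<Rightarrow> real^'n^'n \<Rightarrow> real^'m^'n \<Rightarrow> real^'n^'m \<Rightarrow> bool" where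
  "strongly_stable \<kappa> \<gamma> A B K \<longleftrightarrow>
     (\<exists>(Q::real^'n^'n) (L::real^'n^'n). invertible Q \<and> A - B ** K = matrix_inv Q ** L ** Q \<and>
        spec_norm L \<le> 1 - \<gamma> \<and> spec_norm Q \<le> \<kappa> \<and> spec_norm (matrix_inv Q) \<le> \<kappa> \<and> spec_norm K \<le> \<kappa>)"

text \<open>Membership of a parameter tuple (M^[1],...,M^[H]) (given as a function of the lag index) in the set \<M>.\<close>
definition in_Mset :: "real \<Rightarrow> real \<Rightarrow> nat \<Rightarrow> (nat \<Rightarrow> real^'n^'m) \<Rightarrow> bool" where
  "in_Mset \<kappa> \<gamma> H Mt \<longleftrightarrow>
     (\<forall>i\<in>{1..H}. mat_inf_norm (Mt i) \<le> 2 * sqrt (real CARD('n)) * \<kappa>^3 * (1 - \<gamma>)^(i - 1))"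

definition past :: "(nat \<Rightarrow> 'v::zero) \<Rightarrow> nat \<Rightarrow> nat \<Rightarrow> 'v" where
  "past w t i = (if i \<le> t then w (t - i) else 0)"

text \<open>Parameters M_{t-i} (time index t-i, as function of the lag index);
  for negative times the parameters only ever multiply zero disturbances, we set them to 0.\<close>
definition Mpast :: "(nat \<Rightarrow> nat \<Rightarrow> real^'n^'m) \<Rightarrow> nat \<Rightarrow> nat \<Rightarrow> nat \<Rightarrow> real^'n^'m" where
  "Mpast M t i = (if i \<le> t then M (t - i) else (\<lambda>_. 0))"

definition dap_input :: "real^'n^'m \<Rightarrow> nat \<Rightarrow> (nat \<Rightarrow> nat \<Rightarrow> real^'n^'m) \<Rightarrow> (nat \<Rightarrow> real^'n)
    \<Rightarrow> real^'n \<Rightarrow> nat \<Rightarrow> real^'m" where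
  "dap_input K H M w x t = - (K *v x) + (\<Sum>i=1..H. M t i *v past w t i)"

fun dap_state :: "real^'n^'n \<Rightarrow> real^'m^'n \<Rightarrow> real^'n^'m \<Rightarrow> nat \<Rightarrow> (nat \<Rightarrow> nat \<Rightarrow> real^'n^'m)
    \<Rightarrow> (nat \<Rightarrow> real^'n) \<Rightarrow> nat \<Rightarrow> real^'n" where
  "dap_state A B K H M w 0 = 0"
| "dap_state A B K H M w (Suc t) =
     A *v dap_state A B K H M w t + B *v dap_input K H M w (dap_state A B K H M w t) t + w t"

definition dap_action :: "real^'n^'n \<Rightarrow> real^'m^'n \<Rightarrow> real^'n^'m \<Rightarrow> nat \<Rightarrow> (nat \<Rightarrow> nat \<Rightarrow> real^'n^'m)
    \<Rightarrow> (nat \<Rightarrow> real^'n) \<Rightarrow> nat \<Rightarrow> real^'m" where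
  "dap_action A B K H M w t = dap_input K H M w (dap_state A B K H M w t) t"

definition Phi_x :: "real^'n^'n \<Rightarrow> real^'m^'n \<Rightarrow> real^'n^'m \<Rightarrow> nat \<Rightarrow> (nat \<Rightarrow> nat \<Rightarrow> real^'n^'m)
    \<Rightarrow> nat \<Rightarrow> nat \<Rightarrow> real^'n^'n" where
  "Phi_x A B K H M t k =
     (if k \<le> H then mpow (A - B ** K) (k - 1) else 0) +
     (\<Sum>i=1..H. if 1 \<le> k - i \<and> k - i \<le> H
                 then mpow (A - B ** K) (i - 1) ** B ** Mpast M t i (k - i) else 0)"

definition Phi_u :: "real^'n^'n \<Rightarrow> real^'m^'n \<Rightarrow> real^'n^'m \<Rightarrow> nat \<Rightarrow> (nat \<Rightarrow> nat \<Rightarrow> real^'n^'m)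
    \<Rightarrow> nat \<Rightarrow> nat \<Rightarrow> real^'n^'m" where
  "Phi_u A B K H M t k = (if k \<le> H then M t k else 0) - K ** Phi_x A B K H M t k"

definition approx_state :: "real^'n^'n \<Rightarrow> real^'m^'n \<Rightarrow> real^'n^'m \<Rightarrow> nat \<Rightarrow> (nat \<Rightarrow> nat \<Rightarrow> real^'n^'m)
    \<Rightarrow> (nat \<Rightarrow> real^'n) \<Rightarrow> nat \<Rightarrow> real^'n" where
  "approx_state A B K H M w t = (\<Sum>k=1..2*H. Phi_x A B K H M t k *v past w t k)"

definition approx_action :: "real^'n^'n \<Rightarrow> real^'m^'n \<Rightarrow> real^'n^'m \<Rightarrow> nat \<Rightarrow> (nat \<Rightarrow> nat \<Rightarrow> real^'n^'m)
    \<Rightarrow> (nat \<Rightarrow> real^'n) \<Rightarrow> nat \<Rightarrow> real^'m" where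
  "approx_action A B K H M w t = (\<Sum>k=1..2*H. Phi_u A B K H M t k *v past w t k)"

definition surrogate_cost :: "'w measure \<Rightarrow> (nat \<Rightarrow> 'w \<Rightarrow> real^'n) \<Rightarrow> (nat \<Rightarrow> real^'n \<Rightarrow> real^'m \<Rightarrow> real)
    \<Rightarrow> real^'n^'n \<Rightarrow> real^'m^'n \<Rightarrow> real^'n^'m \<Rightarrow> nat \<Rightarrow> (nat \<Rightarrow> nat \<Rightarrow> real^'n^'m) \<Rightarrow> nat \<Rightarrow> real" where
  "surrogate_cost P w c A B K H M t =
     (LINT \<omega>|P. c t (approx_state A B K H M (\<lambda>s. w s \<omega>) t) (approx_action A B K H M (\<lambda>s. w s \<omega>) t))"

definition total_cost :: "'w measure \<Rightarrow> (nat \<Rightarrow> 'w \<Rightarrow> real^'n) \<Rightarrow> (nat \<Rightarrow> real^'n \<Rightarrow> real^'m \<Rightarrow> real)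
    \<Rightarrow> real^'n^'n \<Rightarrow> real^'m^'n \<Rightarrow> real^'n^'m \<Rightarrow> nat \<Rightarrow> (nat \<Rightarrow> nat \<Rightarrow> real^'n^'m) \<Rightarrow> nat \<Rightarrow> real" where
  "total_cost P w c A B K H M T =
     (LINT \<omega>|P. (\<Sum>t=0..T. c t (dap_state A B K H M (\<lambda>s. w s \<omega>) t) (dap_action A B K H M (\<lambda>s. w s \<omega>) t)))"

end

theory Submission
  imports Defs
begin


lemma spec_norm_bound: "norm (M *v x) \<le> spec_norm M * norm x"
  unfolding spec_norm_def by (rule onorm) simp

lemma spec_norm_nonneg: "0 \<le> spec_norm M"
  unfolding spec_norm_def by (rule onorm_pos_le) simp

lemma infnorm_vec_le:
  fixes x :: "real^'n"
  assumes "\<And>i. \<bar>x $ i\<bar> \<le> c"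
  shows "infnorm x \<le> c"
  unfolding infnorm_cart by (rule cSup_least) (use assms in auto)

lemma inf_norm_bound:
  fixes M :: "real^'a^'b"
  shows "norm (M *v x) \<le> sqrt (real CARD('b)) * (mat_inf_norm M * infnorm x)"
proof -
  have "\<bar>(M *v x) $ i\<bar> \<le> mat_inf_norm M * infnorm x" for i
  proof -
    have "\<bar>(M *v x) $ i\<bar> = \<bar>\<Sum>j\<in>UNIV. M $ i $ j * x $ j\<bar>" by (simp add: matrix_vector_mult_def)
    also have "\<dots> \<le> (\<Sum>j\<in>UNIV. \<bar>M $ i $ j\<bar> * infnorm x)"
      by (rule order_trans[OF sum_abs]) (intro sum_mono, simp add: abs_mult mult_left_mono component_le_infnorm_cart)
    also have "\<dots> = (\<Sum>j\<in>UNIV. \<bar>M $ i $ j\<bar>) * infnorm x" by (simp add: sum_distrib_right)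
    also have "\<dots> \<le> mat_inf_norm M * infnorm x"
      unfolding mat_inf_norm_def by (intro mult_right_mono Max_ge) (auto simp: infnorm_pos_le)
    finally show ?thesis .
  qed
  then have "infnorm (M *v x) \<le> mat_inf_norm M * infnorm x" by (rule infnorm_vec_le)
  moreover have "norm (M *v x) \<le> sqrt (real CARD('b)) * infnorm (M *v x)"
    using norm_le_infnorm[of "M *v x"] by simp
  ultimately show ?thesis by (meson mult_left_mono order_trans real_sqrt_ge_zero of_nat_0_le_iff)
qed

lemma geo_sum_eq:
  fixes r :: real
  shows "(\<Sum>i\<in>{Suc a..N}. r^(i-1)) * (1-r) = (if a \<le> N then r^a - r^N else 0)"
proof (induction N)
  case 0
  then show ?case by simp
next
  case (Suc N)
  show ?case
  proof (cases "a \<le> N")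
    case True
    then have "{Suc a..Suc N} = insert (Suc N) {Suc a..N}" by auto
    then have s: "(\<Sum>i\<in>{Suc a..Suc N}. r^(i-1)) = (\<Sum>i\<in>{Suc a..N}. r^(i-1)) + r^N" by simp
    have "(\<Sum>i\<in>{Suc a..Suc N}. r^(i-1)) * (1-r) = (\<Sum>i\<in>{Suc a..N}. r^(i-1)) * (1-r) + r^N * (1-r)"
      unfolding s by (simp add: distrib_right)
    also have "\<dots> = r^a - r^N + r^N * (1-r)" using Suc.IH True by simp
    also have "\<dots> = r^a - r^(Suc N)" by (simp add: algebra_simps)
    finally show ?thesis using True by simp
  next
    case False
    then show ?thesis by (cases "a = Suc N") auto
  qed
qed

lemma geo_sum_le:
  fixes r :: real
  assumes "0 \<le> r" "r < 1"
  shows "(\<Sum>i\<in>{Suc a..N}. r^(i-1)) \<le> r^a / (1-r)"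
proof -
  have "(\<Sum>i\<in>{Suc a..N}. r^(i-1)) * (1-r) \<le> r^a"
    using geo_sum_eq[of r a N] assms by auto
  then show ?thesis using assms by (simp add: pos_le_divide_eq)
qed

lemma mpow_conj:
  assumes "invertible Q" and "X = matrix_inv Q ** L ** Q"
  shows "mpow X j = matrix_inv Q ** mpow L j ** Q"
proof (induction j)
  case 0
  have "matrix_inv Q ** Q = mat 1"
    using assms(1) unfolding invertible_def matrix_inv_def by (rule someI2_ex) auto
  then show ?case by simp
next
  case (Suc j)
  have QQ: "Q ** matrix_inv Q = mat 1"
    using assms(1) unfolding invertible_def matrix_inv_def by (rule someI2_ex) auto
  have "mpow X (Suc j) = (matrix_inv Q ** L ** Q) ** (matrix_inv Q ** mpow L j ** Q)"
    using Suc assms(2) by simp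
  also have "\<dots> = matrix_inv Q ** L ** (Q ** matrix_inv Q) ** mpow L j ** Q"
    by (simp add: matrix_mul_assoc)
  also have "\<dots> = matrix_inv Q ** mpow L (Suc j) ** Q"
    by (simp add: QQ matrix_mul_assoc)
  finally show ?case .
qed

lemma mpow_contr:
  assumes "spec_norm L \<le> r"
  shows "norm (mpow L j *v z) \<le> r^j * norm z"
proof (induction j)
  case 0
  then show ?case by simp
next
  case (Suc j)
  have "norm (mpow L (Suc j) *v z) = norm (L *v (mpow L j *v z))"
    by (simp add: matrix_vector_mul_assoc)
  also have "\<dots> \<le> spec_norm L * norm (mpow L j *v z)" by (rule spec_norm_bound)
  also have "\<dots> \<le> r * (r^j * norm z)"
    by (rule mult_mono[OF assms Suc]) (use spec_norm_nonneg[of L] assms in auto)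
  finally show ?case by simp
qed

lemma stable_pow:
  fixes A :: "real^'n^'n" and B :: "real^'m^'n" and K :: "real^'n^'m"
  assumes "strongly_stable \<kappa> \<gamma> A B K"
  shows "norm (mpow (A - B ** K) j *v z) \<le> \<kappa>^2 * (1-\<gamma>)^j * norm z"
proof -
  obtain Q L :: "real^'n^'n" where Q: "invertible Q" "A - B ** K = matrix_inv Q ** L ** Q"
    "spec_norm L \<le> 1 - \<gamma>" "spec_norm Q \<le> \<kappa>" "spec_norm (matrix_inv Q) \<le> \<kappa>"
    using assms unfolding strongly_stable_def by blast
  have "mpow (A - B ** K) j *v z = matrix_inv Q *v (mpow L j *v (Q *v z))"
    using mpow_conj[OF Q(1,2)] by (simp add: matrix_vector_mul_assoc matrix_mul_assoc)
  also have "norm \<dots> \<le> spec_norm (matrix_inv Q) * norm (mpow L j *v (Q *v z))"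
    by (rule spec_norm_bound)
  also have "\<dots> \<le> \<kappa> * ((1-\<gamma>)^j * (\<kappa> * norm z))"
  proof (rule mult_mono[OF Q(5)])
    show "norm (mpow L j *v (Q *v z)) \<le> (1-\<gamma>)^j * (\<kappa> * norm z)"
    proof -
      have "norm (mpow L j *v (Q *v z)) \<le> (1-\<gamma>)^j * norm (Q *v z)"
        by (rule mpow_contr[OF Q(3)])
      also have "\<dots> \<le> (1-\<gamma>)^j * (\<kappa> * norm z)"
      proof (rule mult_left_mono)
        show "norm (Q *v z) \<le> \<kappa> * norm z"
          using spec_norm_bound[of Q z] Q(4) by (meson mult_right_mono norm_ge_zero order_trans)
        show "0 \<le> (1-\<gamma>)^j" using Q(3) spec_norm_nonneg[of L] by (meson order_trans zero_le_power)
      qed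
      finally show ?thesis .
    qed
    show "0 \<le> \<kappa>" using Q(5) spec_norm_nonneg[of "matrix_inv Q"] by linarith
  qed simp
  finally show ?thesis by (simp add: power2_eq_square mult_ac)
qed



lemma mv_sum_right: "(A::real^'a^'b) *v (\<Sum>i\<in>S. f i) = (\<Sum>i\<in>S. A *v f i)"
  by (induction S rule: infinite_finite_induct) (auto simp: matrix_vector_right_distrib)

lemma mv_sum_left: "(\<Sum>i\<in>S. f i) *v (x::real^'a) = (\<Sum>i\<in>S. (f i :: real^'a^'b) *v x)"
  by (induction S rule: infinite_finite_induct) (auto simp: matrix_vector_mult_add_rdistrib)

lemma mpow_pred: "0 < x \<Longrightarrow> X ** mpow X (x - Suc 0) = mpow X x"
  by (cases x) auto

definition ut :: "nat \<Rightarrow> (nat \<Rightarrow> nat \<Rightarrow> real^'n^'m) \<Rightarrow> (nat \<Rightarrow> real^'n) \<Rightarrow> nat \<Rightarrow> real^'m" where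
  "ut H M w s = (\<Sum>i=1..H. M s i *v past w s i)"

definition vv :: "real^'m^'n \<Rightarrow> nat \<Rightarrow> (nat \<Rightarrow> nat \<Rightarrow> real^'n^'m) \<Rightarrow> (nat \<Rightarrow> real^'n) \<Rightarrow> nat \<Rightarrow> real^'n" where
  "vv B H M w s = w s + B *v ut H M w s"

lemma state_closed:
  "dap_state A B K H M w t = (\<Sum>i=1..t. mpow (A - B ** K) (i-1) *v vv B H M w (t-i))"
proof (induction t)
  case 0
  then show ?case by simp
next
  case (Suc t)
  let ?F = "\<lambda>i. mpow (A - B ** K) (i-1) *v vv B H M w (Suc t - i)"
  have step: "dap_state A B K H M w (Suc t) = (A - B ** K) *v dap_state A B K H M w t + vv B H M w t"
    by (simp add: dap_input_def vv_def ut_def matrix_vector_mult_diff_rdistrib matrix_vector_right_distrib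
        matrix_vector_mul_assoc algebra_simps)
  have "(A - B ** K) *v dap_state A B K H M w t = (\<Sum>i=1..t. mpow (A - B ** K) i *v vv B H M w (t-i))"
    unfolding Suc mv_sum_right by (intro sum.cong refl) (simp add: matrix_vector_mul_assoc mpow_pred)
  also have "\<dots> = (\<Sum>i=Suc 1..Suc t. ?F i)"
    by (subst sum.shift_bounds_cl_Suc_ivl) simp
  finally have "dap_state A B K H M w (Suc t) = ?F 1 + (\<Sum>i=Suc 1..Suc t. ?F i)"
    using step by simp
  also have "\<dots> = (\<Sum>i=1..Suc t. ?F i)"
    by (rule sum.atLeast_Suc_atMost[symmetric]) simp
  finally show ?case .
qed

lemma approx_closed:
  "approx_state A B K H M w t = (\<Sum>i=1..min t H. mpow (A - B ** K) (i-1) *v vv B H M w (t-i))"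
proof -
  let ?AK = "A - B ** K"
  let ?p = "past w t"
  let ?C = "\<lambda>i k. 1 \<le> k - i \<and> k - i \<le> H"
  have split: "approx_state A B K H M w t =
     (\<Sum>k=1..2*H. (if k \<le> H then mpow ?AK (k-1) *v ?p k else 0)) +
     (\<Sum>k=1..2*H. \<Sum>i=1..H. (if ?C i k then mpow ?AK (i-1) *v (B *v (Mpast M t i (k-i) *v ?p k)) else 0))"
  proof -
    have "Phi_x A B K H M t k *v ?p k = (if k \<le> H then mpow ?AK (k-1) *v ?p k else 0) +
       (\<Sum>i=1..H. (if ?C i k then mpow ?AK (i-1) *v (B *v (Mpast M t i (k-i) *v ?p k)) else 0))" for k
      unfolding Phi_x_def matrix_vector_mult_add_rdistrib mv_sum_left
      by (intro arg_cong2[where f="(+)"] sum.cong refl) (auto simp: matrix_vector_mul_assoc matrix_mul_assoc)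
    then show ?thesis unfolding approx_state_def sum.distrib[symmetric] by simp
  qed
  have S1: "(\<Sum>k=1..2*H. (if k \<le> H then mpow ?AK (k-1) *v ?p k else 0)) =
      (\<Sum>i=1..H. if i \<le> t then mpow ?AK (i-1) *v w (t-i) else 0)"
  proof -
    have "(\<Sum>k=1..2*H. (if k \<le> H then mpow ?AK (k-1) *v ?p k else 0)) = (\<Sum>k\<in>{k\<in>{1..2*H}. k \<le> H}. mpow ?AK (k-1) *v ?p k)"
      by (rule sum.inter_filter[symmetric]) simp
    also have "{k\<in>{1..2*H}. k \<le> H} = {1..H}" by auto
    also have "(\<Sum>k\<in>{1..H}. mpow ?AK (k-1) *v ?p k) = (\<Sum>i=1..H. if i \<le> t then mpow ?AK (i-1) *v w (t-i) else 0)"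
      by (intro sum.cong refl) (simp add: past_def)
    finally show ?thesis .
  qed
  have inner: "(\<Sum>k=1..2*H. (if ?C i k then mpow ?AK (i-1) *v (B *v (Mpast M t i (k-i) *v ?p k)) else 0)) =
      (if i \<le> t then mpow ?AK (i-1) *v (B *v ut H M w (t-i)) else 0)" if i: "i \<in> {1..H}" for i
  proof -
    have "(\<Sum>k=1..2*H. (if ?C i k then mpow ?AK (i-1) *v (B *v (Mpast M t i (k-i) *v ?p k)) else 0))
        = (\<Sum>k\<in>{k\<in>{1..2*H}. ?C i k}. mpow ?AK (i-1) *v (B *v (Mpast M t i (k-i) *v ?p k)))"
      by (rule sum.inter_filter[symmetric]) simp
    also have "{k\<in>{1..2*H}. ?C i k} = {1+i..H+i}" using i by auto
    also have "(\<Sum>k\<in>{1+i..H+i}. mpow ?AK (i-1) *v (B *v (Mpast M t i (k-i) *v ?p k)))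
        = (\<Sum>l\<in>{1..H}. mpow ?AK (i-1) *v (B *v (Mpast M t i l *v ?p (l+i))))"
      by (subst sum.shift_bounds_cl_nat_ivl) simp
    also have "\<dots> = mpow ?AK (i-1) *v (B *v (\<Sum>l\<in>{1..H}. Mpast M t i l *v ?p (l+i)))"
      by (simp add: mv_sum_right)
    also have "(\<Sum>l\<in>{1..H}. Mpast M t i l *v ?p (l+i)) = (if i \<le> t then ut H M w (t-i) else 0)"
      unfolding ut_def by (auto simp: Mpast_def past_def add.commute intro!: sum.cong)
    finally show ?thesis by simp
  qed
  have S2: "(\<Sum>k=1..2*H. \<Sum>i=1..H. (if ?C i k then mpow ?AK (i-1) *v (B *v (Mpast M t i (k-i) *v ?p k)) else 0))
      = (\<Sum>i=1..H. if i \<le> t then mpow ?AK (i-1) *v (B *v ut H M w (t-i)) else 0)"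
    by (subst sum.swap) (rule sum.cong[OF refl inner])
  have "approx_state A B K H M w t = (\<Sum>i=1..H. if i \<le> t then mpow ?AK (i-1) *v vv B H M w (t-i) else 0)"
    unfolding split S1 S2 sum.distrib[symmetric]
    by (intro sum.cong refl) (simp add: vv_def matrix_vector_right_distrib)
  also have "\<dots> = (\<Sum>i\<in>{i\<in>{1..H}. i \<le> t}. mpow ?AK (i-1) *v vv B H M w (t-i))"
    by (rule sum.inter_filter[symmetric]) simp
  also have "{i\<in>{1..H}. i \<le> t} = {1..min t H}" by auto
  finally show ?thesis .
qed

lemma action_closed:
  "dap_action A B K H M w t = ut H M w t - K *v dap_state A B K H M w t"
  by (simp add: dap_action_def dap_input_def ut_def)

lemma approx_action_closed:
  "approx_action A B K H M w t = ut H M w t - K *v approx_state A B K H M w t"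
proof -
  have "approx_action A B K H M w t = (\<Sum>k=1..2*H. (if k \<le> H then M t k *v past w t k else 0))
      - K *v approx_state A B K H M w t"
  proof -
    have "Phi_u A B K H M t k *v past w t k = (if k \<le> H then M t k *v past w t k else 0)
       - K *v (Phi_x A B K H M t k *v past w t k)" for k
      unfolding Phi_u_def matrix_vector_mult_diff_rdistrib by (auto simp: matrix_vector_mul_assoc)
    then show ?thesis unfolding approx_action_def approx_state_def mv_sum_right sum_subtractf[symmetric] by simp
  qed
  also have "(\<Sum>k=1..2*H. (if k \<le> H then M t k *v past w t k else 0)) = (\<Sum>k\<in>{k\<in>{1..2*H}. k \<le> H}. M t k *v past w t k)"
    by (rule sum.inter_filter[symmetric]) simp
  also have "{k\<in>{1..2*H}. k \<le> H} = {1..H}" by auto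
  finally show ?thesis by (simp add: ut_def)
qed



locale detset =
  fixes A :: "real^'n^'n" and B :: "real^'m^'n" and K :: "real^'n^'m"
    and \<kappa> \<gamma> wbar :: real and H :: nat and M :: "nat \<Rightarrow> nat \<Rightarrow> real^'n^'m"
    and w :: "nat \<Rightarrow> real^'n"
  assumes kappa: "\<kappa> \<ge> 1" and gamma: "0 < \<gamma>" "\<gamma> < 1"
    and stable: "strongly_stable \<kappa> \<gamma> A B K"
    and M_in: "\<And>t. in_Mset \<kappa> \<gamma> H (M t)"
    and wbar: "wbar \<ge> 0"
    and w_bdd: "\<And>s. infnorm (w s) \<le> wbar"
begin


lemma U0_nonneg: "(2 * sqrt (real CARD('m) * real CARD('n)) * \<kappa>^3 * wbar) \<ge> 0" using kappa wbar by simp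

lemma ut_bound_sum: "norm (ut H M w s) \<le> (2 * sqrt (real CARD('m) * real CARD('n)) * \<kappa>^3 * wbar) * (\<Sum>i=1..H. (1-\<gamma>)^(i-1))"
proof -
  have "norm (ut H M w s) \<le> (\<Sum>i=1..H. norm (M s i *v past w s i))"
    unfolding ut_def by (rule norm_sum)
  also have "\<dots> \<le> (\<Sum>i=1..H. (2 * sqrt (real CARD('m) * real CARD('n)) * \<kappa>^3 * wbar) * (1-\<gamma>)^(i-1))"
  proof (rule sum_mono)
    fix i assume i: "i \<in> {1..H}"
    have Mi: "mat_inf_norm (M s i) \<le> 2 * sqrt (real CARD('n)) * \<kappa>^3 * (1 - \<gamma>)^(i - 1)"
      using M_in[of s] i unfolding in_Mset_def by blast
    have p: "infnorm (past w s i) \<le> wbar" "0 \<le> infnorm (past w s i)"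
      using w_bdd wbar by (auto simp: past_def infnorm_pos_le infnorm_0)
    have "norm (M s i *v past w s i) \<le> sqrt (real CARD('m)) * (mat_inf_norm (M s i) * infnorm (past w s i))"
      by (rule inf_norm_bound)
    also have "\<dots> \<le> sqrt (real CARD('m)) * ((2 * sqrt (real CARD('n)) * \<kappa>^3 * (1 - \<gamma>)^(i - 1)) * wbar)"
      using gamma kappa by (intro mult_left_mono mult_mono Mi p) auto
    also have "\<dots> = (2 * sqrt (real CARD('m) * real CARD('n)) * \<kappa>^3 * wbar) * (1-\<gamma>)^(i-1)" by (simp add: real_sqrt_mult)
    finally show "norm (M s i *v past w s i) \<le> (2 * sqrt (real CARD('m) * real CARD('n)) * \<kappa>^3 * wbar) * (1-\<gamma>)^(i-1)" .
  qed
  also have "\<dots> = (2 * sqrt (real CARD('m) * real CARD('n)) * \<kappa>^3 * wbar) * (\<Sum>i=1..H. (1-\<gamma>)^(i-1))" by (simp add: sum_distrib_left)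
  finally show ?thesis .
qed

lemma ut_bound_H: "norm (ut H M w s) \<le> (2 * sqrt (real CARD('m) * real CARD('n)) * \<kappa>^3 * wbar) * H"
proof -
  have "(\<Sum>i=1..H. (1-\<gamma>)^(i-1)) \<le> (\<Sum>i=1..H. 1::real)"
    using gamma by (intro sum_mono power_le_one) auto
  then have "(\<Sum>i=1..H. (1-\<gamma>)^(i-1)) \<le> H" by simp
  then show ?thesis using ut_bound_sum[of s] U0_nonneg by (meson mult_left_mono order_trans)
qed

lemma ut_bound_g: "norm (ut H M w s) \<le> (2 * sqrt (real CARD('m) * real CARD('n)) * \<kappa>^3 * wbar) / \<gamma>"
proof -
  have "(\<Sum>i=Suc 0..H. (1-\<gamma>)^(i-1)) \<le> (1-\<gamma>)^0 / (1 - (1-\<gamma>))"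
    using gamma by (intro geo_sum_le) auto
  then have "(\<Sum>i=1..H. (1-\<gamma>)^(i-1)) \<le> 1 / \<gamma>" by simp
  then have "(2 * sqrt (real CARD('m) * real CARD('n)) * \<kappa>^3 * wbar) * (\<Sum>i=1..H. (1-\<gamma>)^(i-1)) \<le> (2 * sqrt (real CARD('m) * real CARD('n)) * \<kappa>^3 * wbar) * (1/\<gamma>)" using U0_nonneg by (rule mult_left_mono)
  then show ?thesis using ut_bound_sum[of s] by simp
qed


lemma V_nonneg: "(sqrt (real CARD('n)) * wbar + max (spec_norm B) 1 * ((2 * sqrt (real CARD('m) * real CARD('n)) * \<kappa>^3 * wbar) * H)) \<ge> 0" using U0_nonneg wbar by simp

lemma vv_bound: "norm (vv B H M w s) \<le> (sqrt (real CARD('n)) * wbar + max (spec_norm B) 1 * ((2 * sqrt (real CARD('m) * real CARD('n)) * \<kappa>^3 * wbar) * H))"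
proof -
  have "norm (w s) \<le> sqrt (real CARD('n)) * infnorm (w s)"
    using norm_le_infnorm[of "w s"] by simp
  also have "\<dots> \<le> sqrt (real CARD('n)) * wbar" using w_bdd by (intro mult_left_mono) auto
  finally have 1: "norm (w s) \<le> sqrt (real CARD('n)) * wbar" .
  have "norm (B *v ut H M w s) \<le> spec_norm B * norm (ut H M w s)" by (rule spec_norm_bound)
  also have "\<dots> \<le> max (spec_norm B) 1 * ((2 * sqrt (real CARD('m) * real CARD('n)) * \<kappa>^3 * wbar) * H)"
    using ut_bound_H[of s] by (intro mult_mono) auto
  finally have 2: "norm (B *v ut H M w s) \<le> max (spec_norm B) 1 * ((2 * sqrt (real CARD('m) * real CARD('n)) * \<kappa>^3 * wbar) * H)" .
  show ?thesis unfolding vv_def using norm_triangle_ineq[of "w s" "B *v ut H M w s"] 1 2 by linarith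
qed

lemma F_bound: "norm (mpow (A - B ** K) (i-1) *v vv B H M w s) \<le> \<kappa>^2 * (1-\<gamma>)^(i-1) * (sqrt (real CARD('n)) * wbar + max (spec_norm B) 1 * ((2 * sqrt (real CARD('m) * real CARD('n)) * \<kappa>^3 * wbar) * H))"
proof -
  have "norm (mpow (A - B ** K) (i-1) *v vv B H M w s) \<le> \<kappa>^2 * (1-\<gamma>)^(i-1) * norm (vv B H M w s)"
    by (rule stable_pow[OF stable])
  also have "\<dots> \<le> \<kappa>^2 * (1-\<gamma>)^(i-1) * (sqrt (real CARD('n)) * wbar + max (spec_norm B) 1 * ((2 * sqrt (real CARD('m) * real CARD('n)) * \<kappa>^3 * wbar) * H))"
    using gamma by (intro mult_left_mono vv_bound) auto
  finally show ?thesis .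
qed

lemma Fsum_bound:
  "norm (\<Sum>i=Suc a..N. mpow (A - B ** K) (i-1) *v vv B H M w (t-i)) \<le> \<kappa>^2 * (sqrt (real CARD('n)) * wbar + max (spec_norm B) 1 * ((2 * sqrt (real CARD('m) * real CARD('n)) * \<kappa>^3 * wbar) * H)) * ((1-\<gamma>)^a / \<gamma>)"
proof -
  have "norm (\<Sum>i=Suc a..N. mpow (A - B ** K) (i-1) *v vv B H M w (t-i))
      \<le> (\<Sum>i=Suc a..N. \<kappa>^2 * (sqrt (real CARD('n)) * wbar + max (spec_norm B) 1 * ((2 * sqrt (real CARD('m) * real CARD('n)) * \<kappa>^3 * wbar) * H)) * (1-\<gamma>)^(i-1))"
    by (rule order_trans[OF norm_sum sum_mono]) (use F_bound in \<open>simp add: mult_ac\<close>)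
  also have "\<dots> = \<kappa>^2 * (sqrt (real CARD('n)) * wbar + max (spec_norm B) 1 * ((2 * sqrt (real CARD('m) * real CARD('n)) * \<kappa>^3 * wbar) * H)) * (\<Sum>i=Suc a..N. (1-\<gamma>)^(i-1))" by (simp add: sum_distrib_left)
  also have "\<dots> \<le> \<kappa>^2 * (sqrt (real CARD('n)) * wbar + max (spec_norm B) 1 * ((2 * sqrt (real CARD('m) * real CARD('n)) * \<kappa>^3 * wbar) * H)) * ((1-\<gamma>)^a / (1 - (1-\<gamma>)))"
    using gamma V_nonneg by (intro mult_left_mono geo_sum_le) auto
  finally show ?thesis by simp
qed


lemma state_bound: "norm (dap_state A B K H M w t) \<le> (\<kappa>^2 * (sqrt (real CARD('n)) * wbar + max (spec_norm B) 1 * ((2 * sqrt (real CARD('m) * real CARD('n)) * \<kappa>^3 * wbar) * H)) / \<gamma>)"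
  using Fsum_bound[where a=0 and N=t and t=t] unfolding state_closed by simp

lemma approx_bound: "norm (approx_state A B K H M w t) \<le> (\<kappa>^2 * (sqrt (real CARD('n)) * wbar + max (spec_norm B) 1 * ((2 * sqrt (real CARD('m) * real CARD('n)) * \<kappa>^3 * wbar) * H)) / \<gamma>)"
  using Fsum_bound[where a=0 and N="min t H" and t=t] unfolding approx_closed by simp

lemma diff_bound: "norm (dap_state A B K H M w t - approx_state A B K H M w t) \<le> (1-\<gamma>)^H * (\<kappa>^2 * (sqrt (real CARD('n)) * wbar + max (spec_norm B) 1 * ((2 * sqrt (real CARD('m) * real CARD('n)) * \<kappa>^3 * wbar) * H)) / \<gamma>)"
proof (cases "t \<le> H")
  case True
  then have "dap_state A B K H M w t - approx_state A B K H M w t = 0"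
    unfolding state_closed approx_closed by (simp add: min_def)
  then show ?thesis using gamma kappa V_nonneg by simp
next
  case False
  let ?F = "\<lambda>i. mpow (A - B ** K) (i-1) *v vv B H M w (t-i)"
  have "{1..t} = {1..H} \<union> {Suc H..t}" using False by auto
  then have "sum ?F {1..t} = sum ?F {1..H} + sum ?F {Suc H..t}"
    by (simp add: sum.union_disjoint ivl_disj_int)
  then have "dap_state A B K H M w t - approx_state A B K H M w t = sum ?F {Suc H..t}"
    unfolding state_closed approx_closed using False by (simp add: min_def)
  then show ?thesis using Fsum_bound[where a=H and N=t and t=t] by (simp add: mult_ac)
qed

lemma dap_action_bound: "norm (dap_action A B K H M w t) \<le> \<kappa> * (\<kappa>^2 * (sqrt (real CARD('n)) * wbar + max (spec_norm B) 1 * ((2 * sqrt (real CARD('m) * real CARD('n)) * \<kappa>^3 * wbar) * H)) / \<gamma>) + (2 * sqrt (real CARD('m) * real CARD('n)) * \<kappa>^3 * wbar) / \<gamma>"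
proof -
  obtain Q L :: "real^'n^'n" where "spec_norm K \<le> \<kappa>"
    using stable unfolding strongly_stable_def by blast
  have "norm (K *v dap_state A B K H M w t) \<le> spec_norm K * norm (dap_state A B K H M w t)"
    by (rule spec_norm_bound)
  also have "\<dots> \<le> \<kappa> * (\<kappa>^2 * (sqrt (real CARD('n)) * wbar + max (spec_norm B) 1 * ((2 * sqrt (real CARD('m) * real CARD('n)) * \<kappa>^3 * wbar) * H)) / \<gamma>)"
    using \<open>spec_norm K \<le> \<kappa>\<close> state_bound spec_norm_nonneg[of K] by (intro mult_mono) auto
  finally show ?thesis unfolding action_closed using ut_bound_g[of t]
    norm_triangle_ineq4[of "ut H M w t" "K *v dap_state A B K H M w t"] by linarith
qed

lemma K_bound: "norm (K *v z) \<le> \<kappa> * norm z"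
proof -
  have "spec_norm K \<le> \<kappa>" using stable unfolding strongly_stable_def by blast
  then show ?thesis using spec_norm_bound[of K z] by (meson mult_right_mono norm_ge_zero order_trans)
qed

lemma approx_action_bound: "norm (approx_action A B K H M w t) \<le> \<kappa> * (\<kappa>^2 * (sqrt (real CARD('n)) * wbar + max (spec_norm B) 1 * ((2 * sqrt (real CARD('m) * real CARD('n)) * \<kappa>^3 * wbar) * H)) / \<gamma>) + (2 * sqrt (real CARD('m) * real CARD('n)) * \<kappa>^3 * wbar) / \<gamma>"
  unfolding approx_action_closed
  using ut_bound_g[of t] K_bound[of "approx_state A B K H M w t"] approx_bound[of t] kappa
    norm_triangle_ineq4[of "ut H M w t" "K *v approx_state A B K H M w t"]
  by (smt (verit) mult_left_mono)

lemma action_diff: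
  "norm (dap_action A B K H M w t - approx_action A B K H M w t) \<le> \<kappa> * ((1-\<gamma>)^H * (\<kappa>^2 * (sqrt (real CARD('n)) * wbar + max (spec_norm B) 1 * ((2 * sqrt (real CARD('m) * real CARD('n)) * \<kappa>^3 * wbar) * H)) / \<gamma>))"
proof -
  have "dap_action A B K H M w t - approx_action A B K H M w t
      = - (K *v (dap_state A B K H M w t - approx_state A B K H M w t))"
    unfolding action_closed approx_action_closed by (simp add: matrix_vector_mult_diff_distrib)
  then show ?thesis using K_bound[of "dap_state A B K H M w t - approx_state A B K H M w t"] diff_bound[of t] kappa
    by (smt (verit) mult_left_mono norm_minus_cancel)
qed

end



lemma seg_norm:
  fixes x y :: "'a::real_normed_vector"
  assumes "norm x \<le> b" "norm y \<le> b" "0 \<le> z" "z \<le> 1"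
  shows "norm (y + z *\<^sub>R (x - y)) \<le> b"
proof -
  have "y + z *\<^sub>R (x - y) = (1 - z) *\<^sub>R y + z *\<^sub>R x" by (simp add: algebra_simps)
  then have "norm (y + z *\<^sub>R (x - y)) \<le> norm ((1 - z) *\<^sub>R y) + norm (z *\<^sub>R x)"
    by (metis norm_triangle_ineq)
  also have "\<dots> = (1 - z) * norm y + z * norm x" using assms by simp
  also have "\<dots> \<le> (1 - z) * b + z * b" using assms by (intro add_mono mult_left_mono) auto
  finally show ?thesis by (simp add: algebra_simps)
qed

lemma cost_lip:
  fixes f :: "real^'n \<Rightarrow> real^'m \<Rightarrow> real" and gx :: "real^'n \<Rightarrow> real^'m \<Rightarrow> real^'n"
    and gu :: "real^'n \<Rightarrow> real^'m \<Rightarrow> real^'m"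
  assumes grad: "\<And>x u. ((\<lambda>p. f (fst p) (snd p)) has_derivative
           (\<lambda>h. gx x u \<bullet> fst h + gu x u \<bullet> snd h)) (at (x, u))"
    and bdd: "\<And>x u. norm x \<le> b \<Longrightarrow> norm u \<le> b \<Longrightarrow> norm (gx x u) \<le> G * b \<and> norm (gu x u) \<le> G * b"
    and n: "norm x \<le> b" "norm u \<le> b" "norm x' \<le> b" "norm u' \<le> b"
  shows "\<bar>f x u - f x' u'\<bar> \<le> G * b * (norm (x - x') + norm (u - u'))"
proof -
  define dx where "dx = x - x'"
  define du where "du = u - u'"
  define g where "g = (\<lambda>s::real. (x' + s *\<^sub>R dx, u' + s *\<^sub>R du))"
  define D where "D = (\<lambda>s. gx (fst (g s)) (snd (g s)) \<bullet> dx + gu (fst (g s)) (snd (g s)) \<bullet> du)"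
  let ?phi = "\<lambda>s. f (fst (g s)) (snd (g s))"
  have der: "DERIV ?phi s :> D s" for s
  proof -
    have gd: "(g has_derivative (\<lambda>h. (h *\<^sub>R dx, h *\<^sub>R du))) (at s)"
      unfolding g_def by (auto intro!: derivative_eq_intros)
    have fd: "((\<lambda>p. f (fst p) (snd p)) has_derivative
           (\<lambda>h. gx (fst (g s)) (snd (g s)) \<bullet> fst h + gu (fst (g s)) (snd (g s)) \<bullet> snd h)) (at (g s))"
      using grad[of "fst (g s)" "snd (g s)"] by simp
    have "((\<lambda>p. f (fst p) (snd p)) \<circ> g has_derivative
        (\<lambda>h. gx (fst (g s)) (snd (g s)) \<bullet> fst h + gu (fst (g s)) (snd (g s)) \<bullet> snd h) \<circ> (\<lambda>h. (h *\<^sub>R dx, h *\<^sub>R du))) (at s)"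
      by (rule diff_chain_at[OF gd fd])
    moreover have "(\<lambda>h. gx (fst (g s)) (snd (g s)) \<bullet> fst h + gu (fst (g s)) (snd (g s)) \<bullet> snd h) \<circ> (\<lambda>h. (h *\<^sub>R dx, h *\<^sub>R du))
        = (*) (D s)"
      by (rule ext) (simp add: D_def algebra_simps)
    ultimately show ?thesis unfolding has_field_derivative_def comp_def by simp
  qed
  obtain z where z: "0 < z" "z < 1" "?phi 1 - ?phi 0 = (1 - 0) * D z"
    using MVT2[of 0 1 ?phi D] der by auto
  have e1: "?phi 1 = f x u" "?phi 0 = f x' u'" by (simp_all add: g_def dx_def du_def)
  have nz: "norm (fst (g z)) \<le> b" "norm (snd (g z)) \<le> b"
    unfolding g_def dx_def du_def using n z by (auto intro!: seg_norm)
  have "\<bar>D z\<bar> \<le> norm (gx (fst (g z)) (snd (g z))) * norm dx + norm (gu (fst (g z)) (snd (g z))) * norm du"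
    unfolding D_def by (rule order_trans[OF abs_triangle_ineq add_mono]) (simp_all add: Cauchy_Schwarz_ineq2)
  also have "\<dots> \<le> G * b * norm dx + G * b * norm du"
    using bdd[OF nz] by (intro add_mono mult_right_mono) auto
  finally show ?thesis using z e1 by (simp add: dx_def du_def algebra_simps)
qed



lemma aux_ring: "(r::real) * Y + k * (r * Y) = Y * (r * (1 + k))" by (simp add: algebra_simps)

context detset
begin

lemma early_eq:
  assumes "t \<le> H"
  shows "dap_state A B K H M w t = approx_state A B K H M w t"
    "dap_action A B K H M w t = approx_action A B K H M w t"
proof -
  show 1: "dap_state A B K H M w t = approx_state A B K H M w t"
    unfolding state_closed approx_closed using assms by (simp add: min_def)
  show "dap_action A B K H M w t = approx_action A B K H M w t"
    unfolding action_closed approx_action_closed 1 ..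
qed

lemma cost_facts:
  fixes f :: "real^'n \<Rightarrow> real^'m \<Rightarrow> real" and gx :: "real^'n \<Rightarrow> real^'m \<Rightarrow> real^'n"
    and gu :: "real^'n \<Rightarrow> real^'m \<Rightarrow> real^'m"
  assumes grad: "\<And>x u. ((\<lambda>p. f (fst p) (snd p)) has_derivative
           (\<lambda>h. gx x u \<bullet> fst h + gu x u \<bullet> snd h)) (at (x, u))"
    and bdd: "\<And>x u b'. b' > 0 \<Longrightarrow> norm x \<le> b' \<Longrightarrow> norm u \<le> b' \<Longrightarrow> norm (gx x u) \<le> G * b' \<and> norm (gu x u) \<le> G * b'"
    and b: "\<kappa> * (\<kappa>^2 * (sqrt (real CARD('n)) * wbar + max (spec_norm B) 1 * ((2 * sqrt (real CARD('m) * real CARD('n)) * \<kappa>^3 * wbar) * H)) / \<gamma>) + (2 * sqrt (real CARD('m) * real CARD('n)) * \<kappa>^3 * wbar) / \<gamma> \<le> b" "b > 0"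
  shows "\<bar>f (dap_state A B K H M w t) (dap_action A B K H M w t)
          - f (approx_state A B K H M w t) (approx_action A B K H M w t)\<bar> \<le> G * b * (b * ((1-\<gamma>)^H * (1+\<kappa>)))"
    "\<bar>f (dap_state A B K H M w t) (dap_action A B K H M w t)\<bar> \<le> \<bar>f 0 0\<bar> + G * b * (2 * b)"
    "\<bar>f (approx_state A B K H M w t) (approx_action A B K H M w t)\<bar> \<le> \<bar>f 0 0\<bar> + G * b * (2 * b)"
proof -
  have bdd': "\<And>x u. norm x \<le> b \<Longrightarrow> norm u \<le> b \<Longrightarrow> norm (gx x u) \<le> G * b \<and> norm (gu x u) \<le> G * b"
    using bdd b(2) by blast
  have Xnn: "(\<kappa>^2 * (sqrt (real CARD('n)) * wbar + max (spec_norm B) 1 * ((2 * sqrt (real CARD('m) * real CARD('n)) * \<kappa>^3 * wbar) * H)) / \<gamma>) \<ge> 0" using V_nonneg gamma by simp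
  have Xb: "(\<kappa>^2 * (sqrt (real CARD('n)) * wbar + max (spec_norm B) 1 * ((2 * sqrt (real CARD('m) * real CARD('n)) * \<kappa>^3 * wbar) * H)) / \<gamma>) \<le> b" using b(1) kappa Xnn U0_nonneg gamma
    by (smt (verit) divide_nonneg_pos mult_le_cancel_right1)
  have n: "norm (dap_state A B K H M w t) \<le> b" "norm (dap_action A B K H M w t) \<le> b"
     "norm (approx_state A B K H M w t) \<le> b" "norm (approx_action A B K H M w t) \<le> b"
    using state_bound[of t] approx_bound[of t] dap_action_bound[of t] approx_action_bound[of t] Xb b(1)
    by linarith+
  have "\<bar>f (dap_state A B K H M w t) (dap_action A B K H M w t)
          - f (approx_state A B K H M w t) (approx_action A B K H M w t)\<bar>
       \<le> G * b * (norm (dap_state A B K H M w t - approx_state A B K H M w t)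
              + norm (dap_action A B K H M w t - approx_action A B K H M w t))"
    by (rule cost_lip[OF grad bdd' n])
  also have "\<dots> \<le> G * b * ((1-\<gamma>)^H * (\<kappa>^2 * (sqrt (real CARD('n)) * wbar + max (spec_norm B) 1 * ((2 * sqrt (real CARD('m) * real CARD('n)) * \<kappa>^3 * wbar) * H)) / \<gamma>) + \<kappa> * ((1-\<gamma>)^H * (\<kappa>^2 * (sqrt (real CARD('n)) * wbar + max (spec_norm B) 1 * ((2 * sqrt (real CARD('m) * real CARD('n)) * \<kappa>^3 * wbar) * H)) / \<gamma>)))"
  proof (rule mult_left_mono)
    show "0 \<le> G * b"
      using bdd[of b 0 0] b(2) by (smt (verit) mult_nonneg_nonneg norm_ge_zero norm_zero)
  qed (use diff_bound[of t] action_diff[of t] in linarith)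
  also have "\<dots> \<le> G * b * (b * ((1-\<gamma>)^H * (1+\<kappa>)))"
  proof (rule mult_left_mono)
    show "0 \<le> G * b"
      using bdd[of b 0 0] b(2) by (smt (verit) mult_nonneg_nonneg norm_ge_zero norm_zero)
    have "(1-\<gamma>)^H * (\<kappa>^2 * (sqrt (real CARD('n)) * wbar + max (spec_norm B) 1 * ((2 * sqrt (real CARD('m) * real CARD('n)) * \<kappa>^3 * wbar) * H)) / \<gamma>) + \<kappa> * ((1-\<gamma>)^H * (\<kappa>^2 * (sqrt (real CARD('n)) * wbar + max (spec_norm B) 1 * ((2 * sqrt (real CARD('m) * real CARD('n)) * \<kappa>^3 * wbar) * H)) / \<gamma>)) = (\<kappa>^2 * (sqrt (real CARD('n)) * wbar + max (spec_norm B) 1 * ((2 * sqrt (real CARD('m) * real CARD('n)) * \<kappa>^3 * wbar) * H)) / \<gamma>) * ((1-\<gamma>)^H * (1+\<kappa>))" by (rule aux_ring)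
    also have "\<dots> \<le> b * ((1-\<gamma>)^H * (1+\<kappa>))" using Xb gamma kappa by (intro mult_right_mono) auto
    finally show "(1-\<gamma>)^H * (\<kappa>^2 * (sqrt (real CARD('n)) * wbar + max (spec_norm B) 1 * ((2 * sqrt (real CARD('m) * real CARD('n)) * \<kappa>^3 * wbar) * H)) / \<gamma>) + \<kappa> * ((1-\<gamma>)^H * (\<kappa>^2 * (sqrt (real CARD('n)) * wbar + max (spec_norm B) 1 * ((2 * sqrt (real CARD('m) * real CARD('n)) * \<kappa>^3 * wbar) * H)) / \<gamma>)) \<le> b * ((1-\<gamma>)^H * (1+\<kappa>))" .
  qed
  finally show "\<bar>f (dap_state A B K H M w t) (dap_action A B K H M w t)
          - f (approx_state A B K H M w t) (approx_action A B K H M w t)\<bar> \<le> G * b * (b * ((1-\<gamma>)^H * (1+\<kappa>)))" .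
  have z: "norm (0::real^'n) \<le> b" "norm (0::real^'m) \<le> b" using b(2) by auto
  show "\<bar>f (dap_state A B K H M w t) (dap_action A B K H M w t)\<bar> \<le> \<bar>f 0 0\<bar> + G * b * (2 * b)"
    using cost_lip[OF grad bdd' n(1,2) z] n(1,2) by (smt (verit) mult_left_mono diff_zero
        bdd[of b 0 0] b(2) mult_nonneg_nonneg norm_ge_zero norm_zero)
  show "\<bar>f (approx_state A B K H M w t) (approx_action A B K H M w t)\<bar> \<le> \<bar>f 0 0\<bar> + G * b * (2 * b)"
    using cost_lip[OF grad bdd' n(3,4) z] n(3,4) by (smt (verit) mult_left_mono diff_zero
        bdd[of b 0 0] b(2) mult_nonneg_nonneg norm_ge_zero norm_zero)
qed

end

lemma mv_meas: "f \<in> borel_measurable P \<Longrightarrow> (\<lambda>\<omega>. (Mx::real^'a^'b) *v f \<omega>) \<in> borel_measurable P"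
  by (rule borel_measurable_continuous_on[where f="\<lambda>x. Mx *v x"]) (auto intro: linear_continuous_on)

context
  fixes P :: "'w measure" and w :: "nat \<Rightarrow> 'w \<Rightarrow> real^'n"
  assumes w_meas: "\<And>t. w t \<in> borel_measurable P"
begin

lemma meas_past: "(\<lambda>\<omega>. past (\<lambda>s. w s \<omega>) t i) \<in> borel_measurable P"
  by (cases "i \<le> t") (auto simp: past_def w_meas)

lemma meas_ut: "(\<lambda>\<omega>. ut H M (\<lambda>s. w s \<omega>) t) \<in> borel_measurable P"
  unfolding ut_def by (intro borel_measurable_sum mv_meas meas_past)

lemma meas_vv: "(\<lambda>\<omega>. vv B H M (\<lambda>s. w s \<omega>) t) \<in> borel_measurable P"
  unfolding vv_def by (intro borel_measurable_add mv_meas meas_ut w_meas)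

lemma meas_state: "(\<lambda>\<omega>. dap_state A B K H M (\<lambda>s. w s \<omega>) t) \<in> borel_measurable P"
  unfolding state_closed by (intro borel_measurable_sum mv_meas meas_vv)

lemma meas_approx: "(\<lambda>\<omega>. approx_state A B K H M (\<lambda>s. w s \<omega>) t) \<in> borel_measurable P"
  unfolding approx_closed by (intro borel_measurable_sum mv_meas meas_vv)

lemma meas_action: "(\<lambda>\<omega>. dap_action A B K H M (\<lambda>s. w s \<omega>) t) \<in> borel_measurable P"
  unfolding action_closed by (intro borel_measurable_diff mv_meas meas_ut meas_state)

lemma meas_approx_action: "(\<lambda>\<omega>. approx_action A B K H M (\<lambda>s. w s \<omega>) t) \<in> borel_measurable P"
  unfolding approx_action_closed by (intro borel_measurable_diff mv_meas meas_ut meas_approx)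

end



lemma div_le_self_aux:
  fixes Z s :: real
  assumes "0 \<le> Z" "1 \<le> s"
  shows "Z / s \<le> Z"
proof -
  have "Z * 1 \<le> Z * s" using assms by (intro mult_left_mono) auto
  then show ?thesis using assms by (simp add: divide_le_eq)
qed

theorem lemma17:
  fixes A :: "real^'n^'n" and B :: "real^'m^'n" and K :: "real^'n^'m"
    and P :: "'w measure" and w :: "nat \<Rightarrow> 'w \<Rightarrow> real^'n" and wbar :: real
    and c :: "nat \<Rightarrow> real^'n \<Rightarrow> real^'m \<Rightarrow> real"
    and gx :: "nat \<Rightarrow> real^'n \<Rightarrow> real^'m \<Rightarrow> real^'n"
    and gu :: "nat \<Rightarrow> real^'n \<Rightarrow> real^'m \<Rightarrow> real^'m"
    and G \<kappa> \<gamma> :: real and H T :: nat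
    and M :: "nat \<Rightarrow> nat \<Rightarrow> real^'n^'m"
  assumes P: "prob_space P"
    and w_meas: "\<And>t. w t \<in> borel_measurable P"
    and w_indep: "prob_space.indep_vars P (\<lambda>_. borel) w UNIV"
    and w_ident: "\<And>t. distr P borel (w t) = distr P borel (w 0)"
    and wbar_pos: "wbar > 0"
    and w_bdd: "\<And>t \<omega>. \<omega> \<in> space P \<Longrightarrow> infnorm (w t \<omega>) \<le> wbar"
    and c_convex: "\<And>t. t \<le> T \<Longrightarrow> convex_on UNIV (\<lambda>p. c t (fst p) (snd p))"
    and c_grad: "\<And>t x u. t \<le> T \<Longrightarrow>
        ((\<lambda>p. c t (fst p) (snd p)) has_derivative
           (\<lambda>h. gx t x u \<bullet> fst h + gu t x u \<bullet> snd h)) (at (x, u))"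
    and G_pos: "G > 0"
    and grad_bdd: "\<And>t x u b'. t \<le> T \<Longrightarrow> b' > 0 \<Longrightarrow> norm x \<le> b' \<Longrightarrow> norm u \<le> b' \<Longrightarrow>
        norm (gx t x u) \<le> G * b' \<and> norm (gu t x u) \<le> G * b'"
    and kappa: "\<kappa> \<ge> 1" and gamma: "0 < \<gamma>" "\<gamma> < 1"
    and stable: "strongly_stable \<kappa> \<gamma> A B K"
    and H: "H \<ge> 1"
    and small: "\<kappa>^2 * (1 - \<gamma>)^H < 1"
    and M_in: "\<And>t. in_Mset \<kappa> \<gamma> H (M t)"
  shows "let n = real CARD('n); m = real CARD('m); \<kappa>B = max (spec_norm B) 1;
             b = \<kappa> * sqrt n * wbar * (\<kappa>^2 + 2 * \<kappa>^5 * \<kappa>B * sqrt (m * n) * H)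
                   / ((1 - \<kappa>^2 * (1 - \<gamma>)^H) * \<gamma>)
                 + 2 * sqrt (m * n) * \<kappa>^3 * wbar / \<gamma>
         in \<bar>total_cost P w c A B K H M T - (\<Sum>t=0..T. surrogate_cost P w c A B K H M t)\<bar>
              \<le> T * G * b^2 * \<kappa>^2 * (1 - \<gamma>)^H * (1 + \<kappa>)"
proof -
  interpret P: prob_space P by (rule P)
  define n where "n = real CARD('n)"
  define m where "m = real CARD('m)"
  define \<kappa>B where "\<kappa>B = max (spec_norm B) 1"
  define U0 where "U0 = 2 * sqrt (m * n) * \<kappa>^3 * wbar"
  define V where "V = sqrt n * wbar + \<kappa>B * (U0 * H)"
  define X where "X = \<kappa>^2 * V / \<gamma>"
  define Y where "Y = sqrt n * wbar * (\<kappa>^2 + 2 * \<kappa>^5 * \<kappa>B * sqrt (m * n) * H)"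
  define \<rho> where "\<rho> = 1 - \<kappa>^2 * (1 - \<gamma>)^H"
  define b where "b = \<kappa> * sqrt n * wbar * (\<kappa>^2 + 2 * \<kappa>^5 * \<kappa>B * sqrt (m * n) * H)
                   / ((1 - \<kappa>^2 * (1 - \<gamma>)^H) * \<gamma>)
                 + 2 * sqrt (m * n) * \<kappa>^3 * wbar / \<gamma>"
  have n1: "1 \<le> n" "1 \<le> m" unfolding n_def m_def by (simp_all add: Suc_leI)
  have sn: "1 \<le> sqrt n" "1 \<le> sqrt m" using n1 by simp_all
  have kB: "1 \<le> \<kappa>B" unfolding \<kappa>B_def by simp
  have U0pos: "0 < U0" unfolding U0_def using n1 kappa wbar_pos by simp
  have Vnn: "0 \<le> V" unfolding V_def using U0pos kB wbar_pos n1 by (intro add_nonneg_nonneg mult_nonneg_nonneg) auto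
  have Xnn: "0 \<le> X" unfolding X_def using Vnn gamma by simp
  have rho: "0 < \<rho>" "\<rho> \<le> 1" unfolding \<rho>_def using small gamma by simp_all
  have b_eq: "b = \<kappa> * (Y / (\<rho> * \<gamma>)) + U0 / \<gamma>"
    unfolding b_def Y_def \<rho>_def U0_def by (simp add: mult.assoc)
  have "\<kappa>^2 * V \<le> Y"
  proof -
    have "\<kappa>^2 * V = \<kappa>^2 * sqrt n * wbar + \<kappa>^2 * \<kappa>B * U0 * H" unfolding V_def by (simp add: algebra_simps)
    also have "\<kappa>^2 * \<kappa>B * U0 * H = sqrt n * wbar * (2 * \<kappa>^5 * \<kappa>B * sqrt (m * n) * H) / sqrt n"
      unfolding U0_def using sn by (simp add: power_def field_simps)
    also have "\<dots> \<le> sqrt n * wbar * (2 * \<kappa>^5 * \<kappa>B * sqrt (m * n) * H)"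
    proof -
      have "0 \<le> sqrt n * wbar * (2 * \<kappa>^5 * \<kappa>B * sqrt (m * n) * H)"
        using sn kappa kB wbar_pos by (intro mult_nonneg_nonneg) auto
      then show ?thesis using sn(1) by (rule div_le_self_aux)
    qed
    finally show ?thesis unfolding Y_def by (simp add: algebra_simps)
  qed
  then have XY: "X \<le> Y / (\<rho> * \<gamma>)"
  proof -
    assume "\<kappa>^2 * V \<le> Y"
    then have "X \<le> Y / \<gamma>" unfolding X_def using gamma by (simp add: divide_right_mono)
    also have "\<dots> \<le> Y / (\<rho> * \<gamma>)"
    proof -
      have "0 \<le> Y" unfolding Y_def using sn kappa kB wbar_pos n1 by simp
      then show ?thesis using rho gamma
        by (intro frac_le) (auto simp: mult_le_cancel_right1)
    qed
    finally show ?thesis .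
  qed
  have bX: "\<kappa> * X + U0 / \<gamma> \<le> b"
  proof -
    have "\<kappa> * X \<le> \<kappa> * (Y / (\<rho> * \<gamma>))" using XY kappa by (intro mult_left_mono) auto
    then show ?thesis unfolding b_eq by simp
  qed
  have bpos: "0 < b" using bX Xnn kappa U0pos gamma
    by (smt (verit) divide_pos_pos mult_nonneg_nonneg)
  define cx where "cx t \<omega> = c t (dap_state A B K H M (\<lambda>s. w s \<omega>) t) (dap_action A B K H M (\<lambda>s. w s \<omega>) t)" for t \<omega>
  define ca where "ca t \<omega> = c t (approx_state A B K H M (\<lambda>s. w s \<omega>) t) (approx_action A B K H M (\<lambda>s. w s \<omega>) t)" for t \<omega>
  define Dd where "Dd = G * b * (b * ((1-\<gamma>)^H * (1+\<kappa>)))"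
  have pw: "\<bar>cx t \<omega> - ca t \<omega>\<bar> \<le> Dd \<and> \<bar>cx t \<omega>\<bar> \<le> \<bar>c t 0 0\<bar> + G * b * (2 * b)
      \<and> \<bar>ca t \<omega>\<bar> \<le> \<bar>c t 0 0\<bar> + G * b * (2 * b) \<and> (t = 0 \<longrightarrow> cx t \<omega> = ca t \<omega>)"
    if om: "\<omega> \<in> space P" and tT: "t \<le> T" for t \<omega>
  proof -
    interpret D: detset A B K \<kappa> \<gamma> wbar H M "\<lambda>s. w s \<omega>"
      by unfold_locales (use kappa gamma stable M_in wbar_pos w_bdd[OF om] in auto)
    have bb: "\<kappa> * (\<kappa>^2 * (sqrt (real CARD('n)) * wbar + max (spec_norm B) 1 * ((2 * sqrt (real CARD('m) * real CARD('n)) * \<kappa>^3 * wbar) * H)) / \<gamma>) + (2 * sqrt (real CARD('m) * real CARD('n)) * \<kappa>^3 * wbar) / \<gamma> \<le> b"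
      using bX unfolding X_def V_def U0_def \<kappa>B_def m_def n_def .
    note F = D.cost_facts[OF c_grad[OF tT] grad_bdd[OF tT] bb bpos, of t]
    show ?thesis using F D.early_eq[of 0] unfolding cx_def ca_def Dd_def by auto
  qed
  have cont: "continuous_on UNIV (\<lambda>p. c t (fst p) (snd p))" if "t \<le> T" for t
  proof (rule continuous_at_imp_continuous_on, intro ballI)
    fix p :: "(real^'n) \<times> (real^'m)"
    show "isCont (\<lambda>p. c t (fst p) (snd p)) p"
      using has_derivative_continuous[OF c_grad[OF that, of "fst p" "snd p"]] by simp
  qed
  have meas: "cx t \<in> borel_measurable P" "ca t \<in> borel_measurable P" if "t \<le> T" for t
  proof -
    show "cx t \<in> borel_measurable P" unfolding cx_def
      by (rule borel_measurable_continuous_Pair[OF meas_state[OF w_meas] meas_action[OF w_meas] cont[OF that]])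
    show "ca t \<in> borel_measurable P" unfolding ca_def
      by (rule borel_measurable_continuous_Pair[OF meas_approx[OF w_meas] meas_approx_action[OF w_meas] cont[OF that]])
  qed
  have int: "integrable P (cx t)" "integrable P (ca t)" if "t \<le> T" for t
  proof -
    show "integrable P (cx t)"
      by (rule P.integrable_const_bound[where B="\<bar>c t 0 0\<bar> + G * b * (2 * b)"])
         (use pw that meas in auto)
    show "integrable P (ca t)"
      by (rule P.integrable_const_bound[where B="\<bar>c t 0 0\<bar> + G * b * (2 * b)"])
         (use pw that meas in auto)
  qed
  have eq: "total_cost P w c A B K H M T - (\<Sum>t=0..T. surrogate_cost P w c A B K H M t)
      = (LINT \<omega>|P. (\<Sum>t=0..T. cx t \<omega>) - (\<Sum>t=0..T. ca t \<omega>))"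
  proof -
    have "total_cost P w c A B K H M T = (LINT \<omega>|P. (\<Sum>t=0..T. cx t \<omega>))"
      unfolding total_cost_def cx_def ..
    moreover have "(\<Sum>t=0..T. surrogate_cost P w c A B K H M t) = (LINT \<omega>|P. (\<Sum>t=0..T. ca t \<omega>))"
      unfolding surrogate_cost_def ca_def[symmetric]
    proof (rule sym, rule Bochner_Integration.integral_sum)
      fix i assume "i \<in> {0..T}" then show "integrable P (ca i)" using int by auto
    qed
    moreover have "(LINT \<omega>|P. (\<Sum>t=0..T. cx t \<omega>) - (\<Sum>t=0..T. ca t \<omega>))
        = (LINT \<omega>|P. (\<Sum>t=0..T. cx t \<omega>)) - (LINT \<omega>|P. (\<Sum>t=0..T. ca t \<omega>))"
      using int by (intro Bochner_Integration.integral_diff integrable_sum) auto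
    ultimately show ?thesis by simp
  qed
  have pwsum: "\<bar>(\<Sum>t=0..T. cx t \<omega>) - (\<Sum>t=0..T. ca t \<omega>)\<bar> \<le> T * Dd" if om: "\<omega> \<in> space P" for \<omega>
  proof -
    have "(\<Sum>t=0..T. cx t \<omega>) - (\<Sum>t=0..T. ca t \<omega>) = (\<Sum>t=0..T. cx t \<omega> - ca t \<omega>)"
      by (simp add: sum_subtractf)
    also have "\<dots> = (cx 0 \<omega> - ca 0 \<omega>) + (\<Sum>t=Suc 0..T. cx t \<omega> - ca t \<omega>)"
      by (rule sum.atLeast_Suc_atMost) simp
    also have "cx 0 \<omega> - ca 0 \<omega> = 0" using pw[OF om, of 0] by simp
    finally have "\<bar>(\<Sum>t=0..T. cx t \<omega>) - (\<Sum>t=0..T. ca t \<omega>)\<bar> \<le> (\<Sum>t=Suc 0..T. \<bar>cx t \<omega> - ca t \<omega>\<bar>)"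
      by (simp add: sum_abs)
    also have "\<dots> \<le> (\<Sum>t=Suc 0..T. Dd)" using pw[OF om] by (intro sum_mono) auto
    finally show ?thesis by simp
  qed
  have "\<bar>LINT \<omega>|P. (\<Sum>t=0..T. cx t \<omega>) - (\<Sum>t=0..T. ca t \<omega>)\<bar> \<le> (LINT \<omega>|P. T * Dd)"
  proof -
    have ig: "integrable P (\<lambda>\<omega>. (\<Sum>t=0..T. cx t \<omega>) - (\<Sum>t=0..T. ca t \<omega>))"
      using int by (intro Bochner_Integration.integrable_diff integrable_sum) auto
    have "\<bar>LINT \<omega>|P. (\<Sum>t=0..T. cx t \<omega>) - (\<Sum>t=0..T. ca t \<omega>)\<bar>
        \<le> (LINT \<omega>|P. \<bar>(\<Sum>t=0..T. cx t \<omega>) - (\<Sum>t=0..T. ca t \<omega>)\<bar>)"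
      by (rule integral_abs_bound)
    also have "\<dots> \<le> (LINT \<omega>|P. T * Dd)"
      by (rule Bochner_Integration.integral_mono) (use ig pwsum in auto)
    finally show ?thesis .
  qed
  also have "\<dots> = T * Dd" by (simp add: P.prob_space)
  also have "\<dots> \<le> T * G * b^2 * \<kappa>^2 * (1 - \<gamma>)^H * (1 + \<kappa>)"
  proof -
    have "0 \<le> G * b^2 * (1 - \<gamma>)^H * (1 + \<kappa>)" using G_pos gamma kappa by simp
    then have "G * b^2 * (1 - \<gamma>)^H * (1 + \<kappa>) * 1 \<le> G * b^2 * (1 - \<gamma>)^H * (1 + \<kappa>) * \<kappa>^2"
      using kappa by (intro mult_left_mono) (auto simp: one_le_power)
    then have "real T * (G * b^2 * (1 - \<gamma>)^H * (1 + \<kappa>) * 1) \<le> real T * (G * b^2 * (1 - \<gamma>)^H * (1 + \<kappa>) * \<kappa>^2)"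
      by (rule mult_left_mono) auto
    then show ?thesis unfolding Dd_def by (simp add: power2_eq_square mult_ac)
  qed
  finally show ?thesis unfolding Let_def eq b_def n_def m_def \<kappa>B_def .
qed

end
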